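(* Let $A\neq 1$ and $B\neq 0$ be real constants and let $(x_n)_{n\ge0}$ be the solution of $$x_{n+10}=\frac{x_n}{A+B\,x_nx_{n+2}x_{n+4}x_{n+6}x_{n+8}},\qquad n\ge 0,$$ with initial conditions $x_0,\dots,x_9$. Suppose the initial conditions satisfy $x_0x_1x_2x_3x_4=\frac{1-A}{B}$, $x_i=x_{i+5}$ for $i=0,\dots,4$, and $x_i\neq x_{i+2}$. Then the solution is periodic with period $5$. *)

theory Defs
  imports Complex_Main
begin

end

theory Submission
  imports Defs
begin

theorem theorem3:
  fixes A B :: real and x :: "nat \<Rightarrow> real"
  assumes hA: "A \<noteq> 1" and hB: "B \<noteq> 0"
    and rec: "\<And>n. x (n + 10) = x n / (A + B * x n * x (n + 2) * x (n + 4) * x (n + 6) * x (n + 8))"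
    and hprod: "x 0 * x 1 * x 2 * x 3 * x 4 = (1 - A) / B"
    and hper: "\<And>i. i \<le> 4 \<Longrightarrow> x i = x (i + 5)"
    and hdist: "\<And>i. i \<le> 4 \<Longrightarrow> x i \<noteq> x (i + 2)"
  shows "(\<forall>n. x (n + 5) = x n) \<and> (\<forall>p>0. (\<forall>n. x (n + p) = x n) \<longrightarrow> 5 \<le> p)"
proof -
  have BP: "A + B * (x 0 * x 1 * x 2 * x 3 * x 4) = 1" using hB hprod by simp
  have key: "x n = x (n mod 5)" for n
  proof (induction n rule: less_induct)
    case (less n)
    show ?case
    proof (cases "n < 10")
      case True
      show ?thesis
      proof (cases "n < 5")
        case True then show ?thesis by simp
      next
        case False
        then have "x (n - 5) = x n" using hper[of "n-5"] \<open>n<10\<close> by simp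
        moreover have "n mod 5 = n - 5" using False \<open>n<10\<close> by (simp add: mod_if)
        ultimately show ?thesis by simp
      qed
    next
      case False
      then obtain k where k: "n = k + 10" by (metis add.commute le_Suc_ex not_less)
      have i0: "x k = x (k mod 5)" using less.IH[of k] less.IH[of "k+2"] less.IH[of "k+4"] less.IH[of "k+6"] less.IH[of "k+8"] k by simp
      have i2: "x (k+2) = x ((k+2) mod 5)" using less.IH[of k] less.IH[of "k+2"] less.IH[of "k+4"] less.IH[of "k+6"] less.IH[of "k+8"] k by simp
      have i4: "x (k+4) = x ((k+4) mod 5)" using less.IH[of k] less.IH[of "k+2"] less.IH[of "k+4"] less.IH[of "k+6"] less.IH[of "k+8"] k by simp
      have i6: "x (k+6) = x ((k+6) mod 5)" using less.IH[of k] less.IH[of "k+2"] less.IH[of "k+4"] less.IH[of "k+6"] less.IH[of "k+8"] k by simp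
      have i8: "x (k+8) = x ((k+8) mod 5)" using less.IH[of k] less.IH[of "k+2"] less.IH[of "k+4"] less.IH[of "k+6"] less.IH[of "k+8"] k by simp
      have prod: "x k * x (k + 2) * x (k + 4) * x (k + 6) * x (k + 8) = x 0 * x 1 * x 2 * x 3 * x 4"
      proof -
        have m: "(k + j) mod 5 = (k mod 5 + j) mod 5" for j by (simp add: mod_add_left_eq)
        have "k mod 5 < 5" by simp
        then consider "k mod 5 = 0" | "k mod 5 = 1" | "k mod 5 = 2" | "k mod 5 = 3" | "k mod 5 = 4" by linarith
        then show ?thesis
          unfolding i0 i2 i4 i6 i8 m
          by cases (simp_all add: mult_ac numeral_2_eq_2)
      qed
      have "x n = x k / (A + B * (x k * x (k + 2) * x (k + 4) * x (k + 6) * x (k + 8)))"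
        using rec[of k] k by (simp add: mult.assoc)
      also have "\<dots> = x k" using prod BP by simp
      also have "\<dots> = x (n mod 5)" using i0 k by (simp add: mod_add_right_eq[symmetric])
      finally show ?thesis .
    qed
  qed
  have per: "\<forall>n. x (n + 5) = x n" using key by (metis mod_add_self2)
  have d0: "x 0 \<noteq> x 2" using hdist[of 0] by (simp add: numeral_2_eq_2)
  have minp: "5 \<le> p" if "p > 0" and hp: "\<forall>n. x (n + p) = x n" for p
  proof (rule ccontr)
    assume "\<not> 5 \<le> p"
    then consider "p = 1" | "p = 2" | "p = 3" | "p = 4" using \<open>p>0\<close> by linarith
    then show False
    proof cases
      case 1 then show ?thesis using hp[rule_format, of 0] hp[rule_format, of 1] d0 by (simp add: numeral_2_eq_2)
    next
      case 2 then show ?thesis using hp[rule_format, of 0] d0 by (simp add: numeral_2_eq_2)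
    next
      case 3 then show ?thesis using hp[rule_format, of 2] per[rule_format, of 0] d0 by (simp add: numeral_2_eq_2)
    next
      case 4 then show ?thesis using hp[rule_format, of 0] hp[rule_format, of 1]
          per[rule_format, of 0] per[rule_format, of 1] hp[rule_format, of 2] d0 by (simp add: numeral_2_eq_2)
    qed
  qed
  show ?thesis using per minp by blast
qed

end
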